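(* Let $(G,S,k)$ be an instance of \textsc{Edge Subset Feedback Vertex Set}, let $T=V(S)$, let $X$ be a dominant solution for $(G,S,k)$, and let $X_0=X\setminus T$. Then every nonempty set $Y\subseteq X_0$ sees at least $|Y|+2$ interesting components of $G-X-S$.
   Context: Graphs are finite and undirected and may contain loops and parallel edges (so cycles of length one and two are allowed). An instance of \textsc{Edge Subset Feedback Vertex Set} is $(G,S,k)$ with $G=(V,E)$, $S\subseteq E$, $k\in\mathbb{N}$. An $S$-cycle is a cycle containing at least one edge of $S$. A solution is a set $X\subseteq V$ with $|X|\le k$ such that $G-X$ contains no $S$-cycle. $V(S)$ is the set of vertices incident with an edge of $S$; $G-X-S$ is the graph obtained from $G$ by deleting the vertices of $X$ and the edges of $S$. A solution $X$ is dominant if it has minimum size among all solutions and, among minimum-size solutions, contains the maximum possible number of vertices of $T$. A connected component $K$ of $G-X-S$ is interesting if it contains a vertex of $T$. A vertex $x\in X_0$ sees a component $K$ if $x$ is adjacent in $G$ to some vertex of $K$; a set $Y\subseteq X_0$ sees $K$ if some $y\in Y$ sees $K$. *)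

theory Defs
  imports Main
begin

text \<open>A finite multigraph (loops and parallel edges allowed): vertex set V, edge set E,
  and an endpoint map ends assigning to each edge an (unordered) pair of endpoints,
  represented as a pair whose order is irrelevant.\<close>

definition multigraph :: "'v set \<Rightarrow> 'e set \<Rightarrow> ('e \<Rightarrow> 'v \<times> 'v) \<Rightarrow> bool" where
  "multigraph V E ends \<longleftrightarrow> finite V \<and> finite E \<and>
     (\<forall>e\<in>E. fst (ends e) \<in> V \<and> snd (ends e) \<in> V)"

definition joins :: "('e \<Rightarrow> 'v \<times> 'v) \<Rightarrow> 'e \<Rightarrow> 'v \<Rightarrow> 'v \<Rightarrow> bool" where
  "joins ends e u w \<longleftrightarrow> ends e = (u, w) \<or> ends e = (w, u)"

text \<open>A cycle with vertex sequence vs and edge sequence es (length n \<ge> 1):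
  distinct vertices, distinct edges, edge i joins vertex i and vertex i+1 (mod n).
  n = 1 is a loop, n = 2 a pair of parallel edges.\<close>

definition is_cycle :: "'v set \<Rightarrow> 'e set \<Rightarrow> ('e \<Rightarrow> 'v \<times> 'v) \<Rightarrow> 'v list \<Rightarrow> 'e list \<Rightarrow> bool" where
  "is_cycle V E ends vs es \<longleftrightarrow>
     length vs \<ge> 1 \<and> length es = length vs \<and> distinct vs \<and> distinct es \<and>
     set vs \<subseteq> V \<and> set es \<subseteq> E \<and>
     (\<forall>i < length vs. joins ends (es ! i) (vs ! i) (vs ! ((i + 1) mod length vs)))"

definition edges_del :: "'e set \<Rightarrow> ('e \<Rightarrow> 'v \<times> 'v) \<Rightarrow> 'v set \<Rightarrow> 'e set" where
  "edges_del E ends X = {e \<in> E. fst (ends e) \<notin> X \<and> snd (ends e) \<notin> X}"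

definition has_S_cycle :: "'v set \<Rightarrow> 'e set \<Rightarrow> ('e \<Rightarrow> 'v \<times> 'v) \<Rightarrow> 'e set \<Rightarrow> bool" where
  "has_S_cycle V E ends S \<longleftrightarrow> (\<exists>vs es. is_cycle V E ends vs es \<and> set es \<inter> S \<noteq> {})"

definition is_solution ::
  "'v set \<Rightarrow> 'e set \<Rightarrow> ('e \<Rightarrow> 'v \<times> 'v) \<Rightarrow> 'e set \<Rightarrow> nat \<Rightarrow> 'v set \<Rightarrow> bool" where
  "is_solution V E ends S k X \<longleftrightarrow> X \<subseteq> V \<and> card X \<le> k \<and>
     \<not> has_S_cycle (V - X) (edges_del E ends X) ends S"

definition VS :: "('e \<Rightarrow> 'v \<times> 'v) \<Rightarrow> 'e set \<Rightarrow> 'v set" where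
  "VS ends S = {v. \<exists>e\<in>S. v = fst (ends e) \<or> v = snd (ends e)}"

definition dominant ::
  "'v set \<Rightarrow> 'e set \<Rightarrow> ('e \<Rightarrow> 'v \<times> 'v) \<Rightarrow> 'e set \<Rightarrow> nat \<Rightarrow> 'v set \<Rightarrow> bool" where
  "dominant V E ends S k X \<longleftrightarrow> is_solution V E ends S k X \<and>
     (\<forall>X'. is_solution V E ends S k X' \<longrightarrow> card X \<le> card X') \<and>
     (\<forall>X'. is_solution V E ends S k X' \<and> card X' = card X \<longrightarrow>
            card (X' \<inter> VS ends S) \<le> card (X \<inter> VS ends S))"

definition adj_GXS :: "'v set \<Rightarrow> 'e set \<Rightarrow> ('e \<Rightarrow> 'v \<times> 'v) \<Rightarrow> 'e set \<Rightarrow> 'v set \<Rightarrow> 'v \<Rightarrow> 'v \<Rightarrow> bool" where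
  "adj_GXS V E ends S X u w \<longleftrightarrow> u \<in> V - X \<and> w \<in> V - X \<and>
     (\<exists>e \<in> edges_del E ends X - S. joins ends e u w)"

definition components_GXS :: "'v set \<Rightarrow> 'e set \<Rightarrow> ('e \<Rightarrow> 'v \<times> 'v) \<Rightarrow> 'e set \<Rightarrow> 'v set \<Rightarrow> 'v set set" where
  "components_GXS V E ends S X =
     {{w \<in> V - X. (adj_GXS V E ends S X)\<^sup>*\<^sup>* v w} | v. v \<in> V - X}"

definition sees :: "'e set \<Rightarrow> ('e \<Rightarrow> 'v \<times> 'v) \<Rightarrow> 'v \<Rightarrow> 'v set \<Rightarrow> bool" where
  "sees E ends x K \<longleftrightarrow> (\<exists>e\<in>E. \<exists>u\<in>K. joins ends e x u)"

end

theory Submission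
  imports Defs
begin


lemma mod_window_aux: assumes "a < (n::nat)" "b < n" "(j + a) mod n = (j + b) mod n" "a < b" shows False
proof -
  have "n dvd (j+b) - (j+a)" using mod_eq_dvd_iff_nat[of "j+a" "j+b" n] assms(3,4) by simp
  then have "n dvd b - a" by simp
  then have "n \<le> b - a" using assms(4) by (simp add: dvd_imp_le)
  then show False using assms by linarith
qed

lemma mod_window: assumes "a < (n::nat)" "b < n" "(j + a) mod n = (j + b) mod n" shows "a = b"
  using mod_window_aux[OF assms] mod_window_aux[OF assms(2,1) assms(3)[symmetric]]
  by (metis linorder_neq_iff)

definition adjE :: "('e \<Rightarrow> 'v \<times> 'v) \<Rightarrow> 'e set \<Rightarrow> 'v \<Rightarrow> 'v \<Rightarrow> bool" where
  "adjE ends F x y \<longleftrightarrow> (\<exists>e\<in>F. joins ends e x y)"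

abbreviation reach where "reach ends F \<equiv> (adjE ends F)\<^sup>*\<^sup>*"

lemma joins_sym: "joins ends e x y \<Longrightarrow> joins ends e y x"
  by (auto simp: joins_def)

lemma joins_ends: "joins ends e x y \<Longrightarrow>
   (x = fst (ends e) \<and> y = snd (ends e)) \<or> (x = snd (ends e) \<and> y = fst (ends e))"
  by (auto simp: joins_def)

lemma adjE_sym: "adjE ends F x y \<Longrightarrow> adjE ends F y x"
  by (auto simp: adjE_def joins_def)

lemma reach_sym: "reach ends F x y \<Longrightarrow> reach ends F y x"
proof (induction rule: rtranclp_induct)
  case base then show ?case by simp
next
  case (step y z)
  then show ?case using adjE_sym by (metis converse_rtranclp_into_rtranclp)
qed

lemma reach_mono: "reach ends F x y \<Longrightarrow> F \<subseteq> G \<Longrightarrow> reach ends G x y"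
proof (induction rule: rtranclp_induct)
  case base then show ?case by simp
next
  case (step y z)
  then have "adjE ends G y z" by (auto simp: adjE_def)
  with step show ?case by simp
qed

lemma chain_reach:
  "(\<And>d. i \<le> d \<Longrightarrow> d < j \<Longrightarrow> adjE ends F (g d) (g (Suc d))) \<Longrightarrow> i \<le> j \<Longrightarrow> reach ends F (g i) (g j)"
proof (induction j)
  case 0 then show ?case by simp
next
  case (Suc j)
  show ?case
  proof (cases "i = Suc j")
    case True then show ?thesis by simp
  next
    case False
    then have ij: "i \<le> j" using Suc.prems by simp
    then have "reach ends F (g i) (g j)" using Suc by simp
    moreover have "adjE ends F (g j) (g (Suc j))" using Suc.prems(1) ij by simp
    ultimately show ?thesis by simp
  qed
qed

definition walkf where
  "walkf ends F m v f \<longleftrightarrow> (\<forall>i<m. f i \<in> F \<and> joins ends (f i) (v i) (v (Suc i)))"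

lemma reach_walk: "reach ends F u w \<Longrightarrow> \<exists>m v f. walkf ends F m v f \<and> v 0 = u \<and> v m = w"
proof (induction rule: rtranclp_induct)
  case base
  show ?case by (rule exI[of _ 0], rule exI[of _ "\<lambda>_. u"]) (auto simp: walkf_def)
next
  case (step y z)
  then obtain m v f where W: "walkf ends F m v f" "v 0 = u" "v m = y" by blast
  from step(2) obtain e where e: "e \<in> F" "joins ends e y z" by (auto simp: adjE_def)
  define v' where "v' = v(Suc m := z)"
  define f' where "f' = f(m := e)"
  have "walkf ends F (Suc m) v' f'"
    unfolding walkf_def
  proof (intro allI impI)
    fix i assume "i < Suc m"
    then consider "i < m" | "i = m" by linarith
    then show "f' i \<in> F \<and> joins ends (f' i) (v' i) (v' (Suc i))"
    proof cases
      case 1 then show ?thesis using W(1) by (auto simp: walkf_def v'_def f'_def)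
    next
      case 2 then show ?thesis using e W(3) by (auto simp: v'_def f'_def)
    qed
  qed
  moreover have "v' 0 = u" "v' (Suc m) = z" using W by (auto simp: v'_def)
  ultimately show ?case by blast
qed

lemma min_walk:
  assumes "reach ends F u w"
  shows "\<exists>m v f. walkf ends F m v f \<and> v 0 = u \<and> v m = w \<and> inj_on v {0..m} \<and> inj_on f {0..<m}"
proof -
  let ?P = "\<lambda>m. \<exists>v f. walkf ends F m v f \<and> v 0 = u \<and> v m = w"
  from reach_walk[OF assms] have ex: "\<exists>m. ?P m" by blast
  define m where "m = (LEAST m. ?P m)"
  have Pm: "?P m" using LeastI_ex[OF ex] m_def by simp
  have minm: "\<And>m'. ?P m' \<Longrightarrow> m \<le> m'" unfolding m_def by (rule Least_le)
  obtain v f where W: "walkf ends F m v f" "v 0 = u" "v m = w" using Pm by blast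
  have injv: "inj_on v {0..m}"
  proof (rule ccontr)
    assume "\<not> inj_on v {0..m}"
    then obtain i j where ij0: "i \<le> m" "j \<le> m" "v i = v j" "i \<noteq> j"
      unfolding inj_on_def by auto
    obtain i j where ij: "i < j" "j \<le> m" "v i = v j"
    proof (cases "i < j")
      case True then show ?thesis using ij0 that by blast
    next
      case False then show ?thesis using ij0 that[of j i] by auto
    qed
    define m' where "m' = m - (j - i)"
    define v' where "v' = (\<lambda>k. if k \<le> i then v k else v (k + (j - i)))"
    define f' where "f' = (\<lambda>k. if k < i then f k else f (k + (j - i)))"
    have "walkf ends F m' v' f'"
      unfolding walkf_def
    proof (intro allI impI)
      fix k assume k: "k < m'"
      show "f' k \<in> F \<and> joins ends (f' k) (v' k) (v' (Suc k))"
      proof (cases "k < i")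
        case True
        then have "k < m" using ij by linarith
        then show ?thesis using W(1) True by (auto simp: walkf_def v'_def f'_def)
      next
        case False
        then have km: "k + (j - i) < m" using k ij unfolding m'_def by linarith
        have A: "f (k + (j - i)) \<in> F \<and> joins ends (f (k + (j - i))) (v (k + (j - i))) (v (Suc (k + (j - i))))"
          using W(1) km by (auto simp: walkf_def)
        have B: "v' k = v (k + (j - i))"
          using False ij by (auto simp: v'_def)
        have C: "v' (Suc k) = v (Suc (k + (j - i)))"
          using False by (auto simp: v'_def)
        show ?thesis using A B C False by (simp add: f'_def)
      qed
    qed
    moreover have "v' 0 = u" using W by (simp add: v'_def)
    moreover have "v' m' = w"
    proof (cases "m' \<le> i")
      case True
      then have "j = m" using ij unfolding m'_def by linarith
      then show ?thesis using True ij W by (simp add: v'_def m'_def)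
    next
      case False
      then show ?thesis using ij W by (simp add: v'_def m'_def)
    qed
    ultimately have "?P m'" by blast
    then have "m \<le> m'" by (rule minm)
    then show False using ij unfolding m'_def by linarith
  qed
  have injf: "inj_on f {0..<m}"
  proof (rule inj_onI)
    fix i j assume i: "i \<in> {0..<m}" and j: "j \<in> {0..<m}" and fij: "f i = f j"
    have ji: "joins ends (f i) (v i) (v (Suc i))" "joins ends (f j) (v j) (v (Suc j))"
      using W(1) i j by (auto simp: walkf_def)
    then have "(v i = v j \<and> v (Suc i) = v (Suc j)) \<or> (v i = v (Suc j) \<and> v (Suc i) = v j)"
      using fij by (auto simp: joins_def)
    then show "i = j"
    proof
      assume "v i = v j \<and> v (Suc i) = v (Suc j)"
      then show "i = j" using injv i j by (auto simp: inj_on_def)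
    next
      assume h: "v i = v (Suc j) \<and> v (Suc i) = v j"
      then have "i = Suc j" using injv i j by (auto simp: inj_on_def)
      moreover have "Suc i = j" using h injv i j by (auto simp: inj_on_def)
      ultimately show "i = j" by simp
    qed
  qed
  show ?thesis using W injv injf by blast
qed

lemma cycle_from_walk:
  assumes eF: "e \<in> F" and eS: "e \<in> S" and jab: "joins ends e a b" and r: "reach ends (F - {e}) a b"
    and W: "\<And>g. g \<in> F \<Longrightarrow> fst (ends g) \<in> W \<and> snd (ends g) \<in> W"
  shows "has_S_cycle W F ends S"
proof -
  obtain m v f where wk: "walkf ends (F - {e}) m v f" "v 0 = a" "v m = b" "inj_on v {0..m}" "inj_on f {0..<m}"
    using min_walk[OF r] by blast
  define vs where "vs = map v [0..<Suc m]"
  define es where "es = map f [0..<m] @ [e]"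
  have endsW: "\<And>g x y. g \<in> F \<Longrightarrow> joins ends g x y \<Longrightarrow> x \<in> W \<and> y \<in> W"
    using W joins_ends by metis
  have vW: "v i \<in> W" if "i \<le> m" for i
  proof (cases "i < m")
    case True then show ?thesis using wk(1) endsW unfolding walkf_def by blast
  next
    case False
    then have im: "i = m" using that by simp
    show ?thesis
    proof (cases "m = 0")
      case True then show ?thesis using im wk(2) endsW[OF eF jab] by simp
    next
      case False
      then have "m - 1 < m" "Suc (m - 1) = m" by auto
      then have "f (m - 1) \<in> F" "joins ends (f (m - 1)) (v (m - 1)) (v m)"
        using wk(1) unfolding walkf_def by (metis DiffE)+
      then show ?thesis using endsW im by blast
    qed
  qed
  have fF: "f i \<in> F - {e}" if "i < m" for i using wk(1) that by (auto simp: walkf_def)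
  have "is_cycle W F ends vs es"
    unfolding is_cycle_def
  proof (intro conjI)
    show "1 \<le> length vs" by (simp add: vs_def)
    show "length es = length vs" by (simp add: vs_def es_def)
    show "distinct vs" unfolding vs_def using wk(4)
      by (simp add: distinct_map atLeastLessThanSuc_atLeastAtMost del: upt_Suc)
    have "e \<notin> f ` {0..<m}" using fF by force
    then show "distinct es" unfolding es_def using wk(5)
      by (simp add: distinct_map)
    show "set vs \<subseteq> W" unfolding vs_def using vW by auto
    show "set es \<subseteq> F" unfolding es_def using fF eF by auto
    show "\<forall>i<length vs. joins ends (es ! i) (vs ! i) (vs ! ((i + 1) mod length vs))"
    proof (intro allI impI)
      fix i assume "i < length vs"
      then have i: "i < Suc m" by (simp add: vs_def)
      show "joins ends (es ! i) (vs ! i) (vs ! ((i + 1) mod length vs))"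
      proof (cases "i < m")
        case True
        then have "es ! i = f i" by (simp add: es_def nth_append)
        moreover have "vs ! i = v i" using i by (simp add: vs_def del: upt_Suc)
        moreover have "(i + 1) mod length vs = Suc i" using True by (simp add: vs_def)
        moreover have "vs ! Suc i = v (Suc i)" using True by (simp add: vs_def del: upt_Suc)
        ultimately show ?thesis using wk(1) True by (simp add: walkf_def)
      next
        case False
        then have im: "i = m" using i by simp
        then have "es ! i = e" by (simp add: es_def nth_append)
        moreover have "vs ! i = b" using im wk(3) by (simp add: vs_def del: upt_Suc)
        moreover have "(i + 1) mod length vs = 0" using im by (simp add: vs_def)
        moreover have "vs ! 0 = a" using wk(2) by (simp add: vs_def del: upt_Suc)
        ultimately show ?thesis using joins_sym[OF jab] by simp
      qed
    qed
  qed
  moreover have "set es \<inter> S \<noteq> {}" using eS by (simp add: es_def)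
  ultimately show ?thesis unfolding has_S_cycle_def by blast
qed



context
  fixes V :: "'v set" and E :: "'e set" and ends :: "'e \<Rightarrow> 'v \<times> 'v" and S :: "'e set" and X :: "'v set"
  assumes mg: "multigraph V E ends"
    and noS: "\<not> has_S_cycle (V - X) (edges_del E ends X) ends S"
begin

abbreviation "HE \<equiv> edges_del E ends X"
abbreviation "cmp v \<equiv> {w \<in> V - X. reach ends (HE - S) v w}"
abbreviation "Conn D A B \<equiv> \<exists>u\<in>A. \<exists>w\<in>B. reach ends (HE - D) u w"

lemma HE_ends: "g \<in> HE \<Longrightarrow> fst (ends g) \<in> V - X \<and> snd (ends g) \<in> V - X"
  using mg unfolding multigraph_def edges_del_def by auto

lemma HE_joins: "g \<in> HE \<Longrightarrow> joins ends g x y \<Longrightarrow> x \<in> V - X \<and> y \<in> V - X"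
  using HE_ends joins_ends by metis

lemma adj_GXS_eq: "adj_GXS V E ends S X = adjE ends (HE - S)"
proof (intro ext iffI)
  fix x y assume "adj_GXS V E ends S X x y"
  then show "adjE ends (HE - S) x y" unfolding adj_GXS_def adjE_def by blast
next
  fix x y assume "adjE ends (HE - S) x y"
  then show "adj_GXS V E ends S X x y" unfolding adj_GXS_def adjE_def using HE_joins by blast
qed

lemma comps_eq: "components_GXS V E ends S X = {cmp v | v. v \<in> V - X}"
  unfolding components_GXS_def adj_GXS_eq by simp

lemma cmp_reach: "x \<in> cmp v \<Longrightarrow> y \<in> cmp v \<Longrightarrow> reach ends (HE - S) x y"
proof -
  assume "x \<in> cmp v" "y \<in> cmp v"
  then have "reach ends (HE - S) v x" "reach ends (HE - S) v y" by auto
  then show ?thesis using rtranclp_trans[OF reach_sym[of ends "HE - S" v x]] by simp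
qed

lemma cmp_eq: "reach ends (HE - S) v1 v2 \<Longrightarrow> cmp v1 = cmp v2"
proof -
  assume r: "reach ends (HE - S) v1 v2"
  then have r': "reach ends (HE - S) v2 v1" by (rule reach_sym)
  show ?thesis
  proof (intro set_eqI iffI)
    fix x assume "x \<in> cmp v1"
    then show "x \<in> cmp v2" using rtranclp_trans[OF r'] by simp
  next
    fix x assume "x \<in> cmp v2"
    then show "x \<in> cmp v1" using rtranclp_trans[OF r] by simp
  qed
qed

lemma Conn_mono: "Conn D A B \<Longrightarrow> D' \<subseteq> D \<Longrightarrow> Conn D' A B"
proof -
  assume "Conn D A B" "D' \<subseteq> D"
  then obtain u w where "u \<in> A" "w \<in> B" "reach ends (HE - D) u w" by blast
  moreover have "HE - D \<subseteq> HE - D'" using \<open>D' \<subseteq> D\<close> by blast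
  ultimately show ?thesis using reach_mono[of ends "HE - D" u w "HE - D'"] by blast
qed

lemma Conn_sym: "Conn D A B \<Longrightarrow> Conn D B A"
proof -
  assume "Conn D A B"
  then obtain u w where "u \<in> A" "w \<in> B" "reach ends (HE - D) u w" by blast
  then show ?thesis using reach_sym[of ends "HE - D" u w] by blast
qed

lemma Conn_trans: "Conn D A B \<Longrightarrow> Conn D B C \<Longrightarrow> B = cmp v \<Longrightarrow> D \<subseteq> S \<Longrightarrow> Conn D A C"
proof -
  assume c1: "Conn D A B" and c2: "Conn D B C" and B: "B = cmp v" and DS: "D \<subseteq> S"
  from c1 obtain u w where u: "u \<in> A" "w \<in> B" "reach ends (HE - D) u w" by blast
  from c2 obtain w' x where x: "w' \<in> B" "x \<in> C" "reach ends (HE - D) w' x" by blast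
  have "reach ends (HE - S) w w'" using cmp_reach[of w v w'] u(2) x(1) B by simp
  moreover have "HE - S \<subseteq> HE - D" using DS by blast
  ultimately have "reach ends (HE - D) w w'" by (rule reach_mono)
  have "reach ends (HE - D) u x" using rtranclp_trans[OF u(3) rtranclp_trans[OF \<open>reach ends (HE - D) w w'\<close> x(3)]] .
  then show "Conn D A C" using u(1) x(2) by blast
qed

lemma key:
  assumes v1: "v1 \<in> V - X" and v2: "v2 \<in> V - X" and ne: "cmp v1 \<noteq> cmp v2" and DS: "D \<subseteq> S"
    and cn: "Conn D (cmp v1) (cmp v2)"
  shows "\<exists>e \<in> HE \<inter> S - D. \<not> Conn (insert e D) (cmp v1) (cmp v2)"
proof -
  from cn obtain u w where u: "u \<in> cmp v1" and w: "w \<in> cmp v2" and r: "reach ends (HE - D) u w" by blast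
  obtain m v f where wk: "walkf ends (HE - D) m v f" "v 0 = u" "v m = w" "inj_on v {0..m}" "inj_on f {0..<m}"
    using min_walk[OF r] by blast
  show ?thesis
  proof (cases "\<exists>i<m. f i \<in> S")
    case False
    have "reach ends (HE - S) (v 0) (v m)"
    proof (rule chain_reach[of 0 m ends "HE - S" v])
      fix d assume "0 \<le> d" "d < m"
      then show "adjE ends (HE - S) (v d) (v (Suc d))"
        using False wk(1) unfolding walkf_def adjE_def by blast
    qed simp
    then have uw: "reach ends (HE - S) u w" using wk by simp
    have v1u: "reach ends (HE - S) v1 u" using u by simp
    have v2w: "reach ends (HE - S) v2 w" using w by simp
    have "reach ends (HE - S) v1 v2"
      using rtranclp_trans[OF v1u rtranclp_trans[OF uw reach_sym[OF v2w]]] .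
    then show ?thesis using cmp_eq ne by blast
  next
    case True
    define i where "i = (LEAST i. i < m \<and> f i \<in> S)"
    have i: "i < m" "f i \<in> S" using LeastI_ex[OF True] unfolding i_def by auto
    have before: "f d \<notin> S" if "d < i" for d
      using not_less_Least[OF that[unfolded i_def]] i(1) that unfolding i_def by auto
    have eHE: "f i \<in> HE - D" "joins ends (f i) (v i) (v (Suc i))"
      using wk(1) i(1) unfolding walkf_def by auto
    have r1: "reach ends (HE - S) (v 0) (v i)"
    proof (rule chain_reach[of 0 i ends "HE - S" v])
      fix d assume "0 \<le> d" "d < i"
      then have "d < m" "f d \<notin> S" using i(1) before by auto
      then have "f d \<in> HE - S" "joins ends (f d) (v d) (v (Suc d))"
        using wk(1) unfolding walkf_def by auto
      then show "adjE ends (HE - S) (v d) (v (Suc d))"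
        unfolding adjE_def by blast
    qed simp
    have r2: "reach ends (HE - insert (f i) D) (v (Suc i)) (v m)"
    proof (rule chain_reach[of "Suc i" m ends "HE - insert (f i) D" v])
      fix d assume d: "Suc i \<le> d" "d < m"
      then have "f d \<noteq> f i" using wk(5) i(1) unfolding inj_on_def by fastforce
      show "adjE ends (HE - insert (f i) D) (v d) (v (Suc d))"
        using \<open>f d \<noteq> f i\<close> wk(1) d unfolding walkf_def adjE_def by auto
    qed (use i in simp)
    show ?thesis
    proof (rule bexI[of _ "f i"])
      show "f i \<in> HE \<inter> S - D" using eHE i by auto
      show "\<not> Conn (insert (f i) D) (cmp v1) (cmp v2)"
      proof
        assume "Conn (insert (f i) D) (cmp v1) (cmp v2)"
        then obtain u' w' where u': "u' \<in> cmp v1" and w': "w' \<in> cmp v2"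
          and r': "reach ends (HE - insert (f i) D) u' w'" by blast
        have s1: "HE - S \<subseteq> HE - {f i}" using i by auto
        have s2: "HE - insert (f i) D \<subseteq> HE - {f i}" by auto
        have a1: "reach ends (HE - {f i}) (v i) u"
          using reach_mono[OF reach_sym[OF r1] s1] wk(2) by simp
        have a2: "reach ends (HE - {f i}) u u'"
          using reach_mono[OF cmp_reach[OF u u'] s1] .
        have a3: "reach ends (HE - {f i}) u' w'" using reach_mono[OF r' s2] .
        have a4: "reach ends (HE - {f i}) w' w"
          using reach_mono[OF cmp_reach[OF w' w] s1] .
        have a5: "reach ends (HE - {f i}) w (v (Suc i))"
          using reach_mono[OF reach_sym[OF r2] s2] wk(3) by simp
        have rch: "reach ends (HE - {f i}) (v i) (v (Suc i))"
          using rtranclp_trans[OF a1 rtranclp_trans[OF a2 rtranclp_trans[OF a3 rtranclp_trans[OF a4 a5]]]] .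
        have "has_S_cycle (V - X) HE ends S"
          apply (rule cycle_from_walk[of "f i" HE S ends "v i" "v (Suc i)" "V - X"])
          using eHE i rch HE_ends by auto
        with noS show False by simp
      qed
    qed
  qed
qed


lemma comb:
  "finite C \<Longrightarrow> C \<noteq> {} \<Longrightarrow> (\<forall>K\<in>C. \<exists>v\<in>V - X. K = cmp v) \<Longrightarrow> D0 \<subseteq> HE \<inter> S \<Longrightarrow> finite D0 \<Longrightarrow>
   \<exists>D. D0 \<subseteq> D \<and> D \<subseteq> HE \<inter> S \<and> finite D \<and> card D + 1 \<le> card D0 + card C \<and>
       (\<forall>K1\<in>C. \<forall>K2\<in>C. Conn D K1 K2 \<longrightarrow> K1 = K2)"
proof (induction "card C" arbitrary: C D0 rule: less_induct)
  case less
  note finC = less.prems(1) and neC = less.prems(2) and compC = less.prems(3)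
    and D0S = less.prems(4) and finD0 = less.prems(5)
  show ?case
  proof (cases "\<forall>K1\<in>C. \<forall>K2\<in>C. Conn D0 K1 K2 \<longrightarrow> K1 = K2")
    case True
    have "card C \<ge> 1" using finC neC by (simp add: Suc_le_eq card_gt_0_iff)
    show ?thesis
    proof (intro exI[of _ D0] conjI)
      show "D0 \<subseteq> D0" by simp
      show "D0 \<subseteq> HE \<inter> S" by (rule D0S)
      show "finite D0" by (rule finD0)
      show "card D0 + 1 \<le> card D0 + card C" using \<open>card C \<ge> 1\<close> by simp
      show "\<forall>K1\<in>C. \<forall>K2\<in>C. Conn D0 K1 K2 \<longrightarrow> K1 = K2" by (rule True)
    qed
  next
    case False
    then obtain K1 K2 where K: "K1 \<in> C" "K2 \<in> C" "Conn D0 K1 K2" "K1 \<noteq> K2" by blast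
    obtain v1 where v1: "v1 \<in> V - X" "K1 = cmp v1" using compC K(1) by blast
    obtain v2 where v2: "v2 \<in> V - X" "K2 = cmp v2" using compC K(2) by blast
    have D0S': "D0 \<subseteq> S" using D0S by blast
    have ne12: "cmp v1 \<noteq> cmp v2" using K(4) v1(2) v2(2) by simp
    have cn12: "Conn D0 (cmp v1) (cmp v2)" using K(3) v1(2) v2(2) by simp
    obtain e where e0: "e \<in> HE \<inter> S - D0" "\<not> Conn (insert e D0) (cmp v1) (cmp v2)"
      using key[OF v1(1) v2(1) ne12 D0S' cn12] by blast
    have e: "e \<in> HE \<inter> S - D0" "\<not> Conn (insert e D0) K1 K2"
      using e0 v1(2) v2(2) by simp_all
    define D0' where "D0' = insert e D0"
    define C1 where "C1 = {K \<in> C. Conn D0' K K2}"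
    define C2 where "C2 = C - C1"
    have "v2 \<in> K2" using v2 by simp
    then have "Conn D0' K2 K2" using rtranclp.rtrancl_refl by blast
    then have K2C1: "K2 \<in> C1" unfolding C1_def using K(2) by simp
    have K1C1: "K1 \<notin> C1" unfolding C1_def D0'_def using e(2) by simp
    have C1C: "C1 \<subseteq> C" "C2 \<subseteq> C" unfolding C1_def C2_def by auto
    have finC1: "finite C1" "finite C2" using finC C1C finite_subset by auto
    have "C1 \<subset> C" using C1C(1) K1C1 K(1) by blast
    then have cardC1: "card C1 < card C" by (rule psubset_card_mono[OF finC])
    have "C2 \<subset> C" using K2C1 K(2) unfolding C2_def by blast
    then have cardC2: "card C2 < card C" by (rule psubset_card_mono[OF finC])
    have C1ne: "C1 \<noteq> {}" using K2C1 by blast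
    have comp1: "\<forall>K\<in>C1. \<exists>v\<in>V - X. K = cmp v" using compC C1C(1) by blast
    have comp2: "\<forall>K\<in>C2. \<exists>v\<in>V - X. K = cmp v" using compC C1C(2) by blast
    have cardsum: "card C = card C1 + card C2"
      unfolding C2_def using finC C1C(1) card_Diff_subset[OF finC1(1) C1C(1)]
      by (simp add: card_mono)
    have D0'S: "D0' \<subseteq> HE \<inter> S" "finite D0'" using e D0S finD0 unfolding D0'_def by auto
    have cardD0': "card D0' = card D0 + 1" unfolding D0'_def using e finD0 by simp
    obtain D1 where D1: "D0' \<subseteq> D1" "D1 \<subseteq> HE \<inter> S" "finite D1" "card D1 + 1 \<le> card D0' + card C1"
      "\<forall>K1\<in>C1. \<forall>K2\<in>C1. Conn D1 K1 K2 \<longrightarrow> K1 = K2"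
      using less.hyps[OF cardC1 finC1(1) C1ne comp1 D0'S(1) D0'S(2)] by blast
    have C2ne: "C2 \<noteq> {}" unfolding C2_def using K1C1 K(1) by blast
    obtain D where D: "D1 \<subseteq> D" "D \<subseteq> HE \<inter> S" "finite D" "card D + 1 \<le> card D1 + card C2"
      "\<forall>K1\<in>C2. \<forall>K2\<in>C2. Conn D K1 K2 \<longrightarrow> K1 = K2"
      using less.hyps[OF cardC2 finC1(2) C2ne comp2 D1(2) D1(3)] by blast
    have DS: "D0' \<subseteq> S" using D0'S by blast
    have DD: "D0' \<subseteq> D" "D1 \<subseteq> D" using D(1) D1(1) by auto
    have cross: False if a1: "A \<in> C1" and a2: "B \<in> C2" and a3: "Conn D A B" for A B
    proof -
      have c1: "Conn D0' A B" by (rule Conn_mono[OF a3 DD(1)])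
      have c2: "Conn D0' B A" by (rule Conn_sym[OF c1])
      have c3: "Conn D0' A K2" using a1 unfolding C1_def by simp
      have AC: "A \<in> C" using a1 C1C(1) by blast
      obtain vA where vA: "vA \<in> V - X" "A = cmp vA" using compC AC by blast
      have c4: "Conn D0' B K2" by (rule Conn_trans[OF c2 c3 vA(2) DS])
      have BC: "B \<in> C" using a2 unfolding C2_def by simp
      have "B \<in> C1" unfolding C1_def using BC c4 by simp
      then show False using a2 unfolding C2_def by simp
    qed
    have sep: "K = K'" if KK1: "K \<in> C" and KK2: "K' \<in> C" and KK3: "Conn D K K'" for K K'
    proof (cases "K \<in> C1")
      case KC1: True
      show ?thesis
      proof (cases "K' \<in> C1")
        case True
        have "Conn D1 K K'" by (rule Conn_mono[OF KK3 DD(2)])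
        then show ?thesis using D1(5) KC1 True by blast
      next
        case False
        then have "K' \<in> C2" unfolding C2_def using KK2 by simp
        from cross[OF KC1 this KK3] show ?thesis by (rule FalseE)
      qed
    next
      case False
      then have KC2: "K \<in> C2" unfolding C2_def using KK1 by simp
      show ?thesis
      proof (cases "K' \<in> C1")
        case True
        from cross[OF True KC2 Conn_sym[OF KK3]] show ?thesis by (rule FalseE)
      next
        case False
        then have "K' \<in> C2" unfolding C2_def using KK2 by simp
        then show ?thesis using D(5) KC2 KK3 by blast
      qed
    qed
    show ?thesis
    proof (intro exI[of _ D] conjI)
      show "D0 \<subseteq> D" using D(1) D1(1) unfolding D0'_def by blast
      show "D \<subseteq> HE \<inter> S" by (rule D(2))
      show "finite D" by (rule D(3))
      show "card D + 1 \<le> card D0 + card C" using D(4) D1(4) cardD0' cardsum by linarith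
      show "\<forall>K1\<in>C. \<forall>K2\<in>C. Conn D K1 K2 \<longrightarrow> K1 = K2" using sep by blast
    qed
  qed
qed

lemma nonint:
  "reach ends HE u x \<Longrightarrow> u \<in> V - X \<Longrightarrow> cmp u \<inter> VS ends S = {} \<Longrightarrow> x \<in> cmp u"
proof (induction rule: rtranclp_induct)
  case base then show ?case by simp
next
  case (step y z)
  then have y: "y \<in> cmp u" by blast
  from step(2) obtain g where g: "g \<in> HE" "joins ends g y z" unfolding adjE_def by blast
  show ?case
  proof (cases "g \<in> S")
    case True
    then have "y \<in> VS ends S" using joins_ends[OF g(2)] unfolding VS_def by blast
    then show ?thesis using y step(5) by blast
  next
    case False
    then have adj: "adjE ends (HE - S) y z" using g unfolding adjE_def by blast
    have "reach ends (HE - S) u y" using y by simp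
    then have "reach ends (HE - S) u z" using rtranclp.rtrancl_into_rtrancl adj by metis
    moreover have "z \<in> V - X" using HE_joins[OF g] by blast
    ultimately show ?thesis by simp
  qed
qed


lemma no_new_cycle:
  assumes Y: "Y \<subseteq> X - VS ends S" and DHS: "D \<subseteq> HE \<inter> S"
    and sep: "\<forall>K1\<in>C. \<forall>K2\<in>C. Conn D K1 K2 \<longrightarrow> K1 = K2"
    and Cdef: "C = {K \<in> components_GXS V E ends S X. K \<inter> VS ends S \<noteq> {} \<and> (\<exists>y\<in>Y. sees E ends y K)}"
    and Zdef: "Z = (\<lambda>e. fst (ends e)) ` D"
  shows "\<not> has_S_cycle (V - ((X - Y) \<union> Z)) (edges_del E ends ((X - Y) \<union> Z)) ends S"
proof
  define X' where "X' = (X - Y) \<union> Z"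
  assume "has_S_cycle (V - ((X - Y) \<union> Z)) (edges_del E ends ((X - Y) \<union> Z)) ends S"
  then obtain vs es where cyc: "is_cycle (V - X') (edges_del E ends X') ends vs es" and eS: "set es \<inter> S \<noteq> {}"
    unfolding has_S_cycle_def X'_def by blast
  define n where "n = length vs"
  have n1: "1 \<le> n" and len: "length es = n" and dvs: "distinct vs" and des: "distinct es"
    and svs: "set vs \<subseteq> V - X'" and ses: "set es \<subseteq> edges_del E ends X'"
    and jn: "\<forall>i<n. joins ends (es ! i) (vs ! i) (vs ! ((i + 1) mod n))"
    using cyc unfolding is_cycle_def n_def by simp_all
  have jn': "joins ends (es ! i) (vs ! i) (vs ! ((i + 1) mod n))" if "i < n" for i
    using jn that by blast
  have VSe: "x \<in> VS ends S \<and> y \<in> VS ends S" if "g \<in> S" "joins ends g x y" for g x y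
    using joins_ends[OF that(2)] that(1) unfolding VS_def by blast
  have YT: "x \<notin> VS ends S" if "x \<in> Y" for x using Y that by blast
  obtain e0' where "e0' \<in> set es" "e0' \<in> S" using eS by blast
  then obtain i0 where i0: "i0 < n" "es ! i0 \<in> S" using len by (metis in_set_conv_nth)
  have npos: "0 < n" using n1 by simp
  show False
  proof (cases "\<exists>j<n. vs ! j \<in> Y")
    case False
    have svs': "set vs \<subseteq> V - X"
    proof
      fix x assume xs: "x \<in> set vs"
      then obtain j where "j < n" "x = vs ! j" using n_def in_set_conv_nth by metis
      then have "x \<notin> Y" using False by blast
      moreover have "x \<in> V - X'" using svs xs by blast
      ultimately show "x \<in> V - X" unfolding X'_def by blast
    qed
    have ses': "set es \<subseteq> HE"
    proof
      fix g assume gs: "g \<in> set es"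
      then obtain j where j: "j < n" "g = es ! j" using len in_set_conv_nth by metis
      have gE: "g \<in> E" using ses gs unfolding edges_del_def by blast
      have "vs ! j \<in> set vs" "vs ! ((j+1) mod n) \<in> set vs" using j npos n_def by auto
      then have vin: "vs ! j \<in> V - X" "vs ! ((j+1) mod n) \<in> V - X" using svs' by auto
      have jg: "joins ends g (vs ! j) (vs ! ((j+1) mod n))" using jn' j by simp
      have "fst (ends g) \<in> V - X \<and> snd (ends g) \<in> V - X" using joins_ends[OF jg] vin by auto
      then show "g \<in> HE" using gE unfolding edges_del_def by simp
    qed
    have "is_cycle (V - X) HE ends vs es"
      unfolding is_cycle_def using n1 len dvs des svs' ses' jn by (simp add: n_def)
    then have "has_S_cycle (V - X) HE ends S" unfolding has_S_cycle_def using eS by blast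
    with noS show False by simp
  next
    case True
    then obtain j0 where j0: "j0 < n" "vs ! j0 \<in> Y" by blast
    define vv where "vv = (\<lambda>d. vs ! ((j0 + d) mod n))"
    define ff where "ff = (\<lambda>d. es ! ((j0 + d) mod n))"
    have jv: "joins ends (ff d) (vv d) (vv (Suc d))" for d
    proof -
      have "(j0 + d) mod n < n" using npos by simp
      then have "joins ends (es ! ((j0+d) mod n)) (vs ! ((j0+d) mod n)) (vs ! (((j0+d) mod n + 1) mod n))"
        using jn' by blast
      moreover have "((j0+d) mod n + 1) mod n = (j0 + Suc d) mod n" by (simp add: mod_Suc_eq)
      ultimately show ?thesis unfolding ff_def vv_def by simp
    qed
    have vvin: "vv d \<in> set vs" for d unfolding vv_def using npos n_def by simp
    have ffin: "ff d \<in> set es" for d unfolding ff_def using npos len by simp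
    define t where "t = (i0 + n - j0) mod n"
    have tn: "t < n" using npos by (simp add: t_def)
    have jt: "(j0 + t) mod n = i0" using j0 i0 by (simp add: t_def mod_add_right_eq)
    define e0 where "e0 = ff t"
    have e0: "e0 = es ! i0" "e0 \<in> S" using jt i0 by (simp_all add: e0_def ff_def)
    have abT: "vv t \<in> VS ends S" "vv (Suc t) \<in> VS ends S" using VSe[OF e0(2)] jv[of t] e0_def by auto
    have notYab: "vv t \<notin> Y" "vv (Suc t) \<notin> Y" using abT YT by auto
    have vv0: "vv 0 \<in> Y" using j0 by (simp add: vv_def)
    have vvn: "vv n \<in> Y" using j0 by (simp add: vv_def)
    have "t \<noteq> 0"
    proof
      assume "t = 0"
      then show False using vv0 notYab(1) by simp
    qed
    have "Suc t \<noteq> n" using vvn notYab(2) by auto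
    then have tn2: "Suc t < n" using tn by simp
    define P where "P = {d. d \<le> t \<and> vv d \<in> Y}"
    have finP: "finite P" unfolding P_def by (rule finite_subset[of _ "{..t}"]) auto
    have P0: "0 \<in> P" using vv0 P_def by simp
    define p where "p = Max P"
    have pP: "p \<in> P" using finP P0 Max_in p_def by blast
    have p: "p \<le> t" "vv p \<in> Y" using pP P_def by auto
    have pmax: "d \<le> p" if "d \<le> t" "vv d \<in> Y" for d
      using Max_ge[OF finP, of d] that unfolding P_def p_def by simp
    have pt: "p < t" using p notYab(1) le_neq_implies_less by blast
    define q where "q = (LEAST d. t < d \<and> vv d \<in> Y)"
    have qex: "t < n \<and> vv n \<in> Y" using tn vvn by simp
    have q: "t < q" "vv q \<in> Y" using LeastI[of "\<lambda>d. t < d \<and> vv d \<in> Y" n] qex unfolding q_def by auto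
    have qn: "q \<le> n" using Least_le[of "\<lambda>d. t < d \<and> vv d \<in> Y" n] qex unfolding q_def by auto
    have qmin: "vv d \<notin> Y" if "t < d" "d < q" for d
      using not_less_Least[of d "\<lambda>d. t < d \<and> vv d \<in> Y"] that unfolding q_def by blast
    have "q \<noteq> Suc t" using q(2) notYab(2) by auto
    then have tq: "Suc t < q" using q(1) by simp
    have notY: "vv d \<notin> Y" if "p < d" "d < q" for d
    proof (cases "d \<le> t")
      case True then show ?thesis using pmax[OF True] that(1) by fastforce
    next
      case False then show ?thesis using qmin that(2) by simp
    qed
    have vvX': "vv d \<in> V - X'" for d using vvin svs by blast
    have vvok: "vv d \<in> V - X \<and> vv d \<notin> Z" if "p < d" "d < q" for d
      using notY[OF that] vvX'[of d] unfolding X'_def by blast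
    define F' where "F' = {g \<in> HE. fst (ends g) \<notin> Z \<and> snd (ends g) \<notin> Z}"
    have ffE: "ff d \<in> E" for d using ffin[of d] ses unfolding edges_del_def by blast
    have edge_ok: "ff d \<in> F'" if "p < d" "Suc d < q" for d
    proof -
      have "vv d \<in> V - X \<and> vv d \<notin> Z" "vv (Suc d) \<in> V - X \<and> vv (Suc d) \<notin> Z"
        using vvok that by auto
      then have "fst (ends (ff d)) \<in> V - X \<and> fst (ends (ff d)) \<notin> Z \<and> snd (ends (ff d)) \<in> V - X \<and> snd (ends (ff d)) \<notin> Z"
        using joins_ends[OF jv[of d]] by auto
      then show "ff d \<in> F'" unfolding F'_def edges_del_def using ffE[of d] by simp
    qed
    have ffne: "ff d \<noteq> e0" if "d < n" "d \<noteq> t" for d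
    proof -
      have "(j0 + d) mod n \<noteq> (j0 + t) mod n" using mod_window[OF that(1) tn] that(2) by blast
      moreover have "(j0 + d) mod n < length es" "(j0 + t) mod n < length es" using npos len by simp_all
      ultimately show "ff d \<noteq> e0" unfolding e0_def ff_def
        using nth_eq_iff_index_eq[OF des, of "(j0 + d) mod n" "(j0 + t) mod n"] by simp
    qed
    have F'D: "F' \<subseteq> HE - D"
    proof
      fix g assume gF: "g \<in> F'"
      then have "g \<in> HE" "fst (ends g) \<notin> Z" unfolding F'_def by auto
      moreover have "g \<notin> D" using \<open>fst (ends g) \<notin> Z\<close> unfolding Zdef by blast
      ultimately show "g \<in> HE - D" by blast
    qed
    have F'HE: "F' \<subseteq> HE" unfolding F'_def by blast
    have r1: "reach ends (F' - {e0}) (vv (Suc p)) (vv t)"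
    proof (rule chain_reach[of "Suc p" t ends "F' - {e0}" vv])
      fix d assume d: "Suc p \<le> d" "d < t"
      then have "ff d \<in> F'" "ff d \<noteq> e0" using edge_ok[of d] ffne[of d] tq tn by auto
      then show "adjE ends (F' - {e0}) (vv d) (vv (Suc d))" unfolding adjE_def using jv[of d] by blast
    qed (use pt in simp)
    have r2: "reach ends (F' - {e0}) (vv (Suc t)) (vv (q - 1))"
    proof (rule chain_reach[of "Suc t" "q - 1" ends "F' - {e0}" vv])
      fix d assume d: "Suc t \<le> d" "d < q - 1"
      then have "ff d \<in> F'" "ff d \<noteq> e0" using edge_ok[of d] ffne[of d] pt qn by auto
      then show "adjE ends (F' - {e0}) (vv d) (vv (Suc d))" unfolding adjE_def using jv[of d] by blast
    qed (use tq in simp)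
    have e0F: "e0 \<in> F'" using edge_ok[of t] pt tq e0_def by simp
    define u where "u = vv (Suc p)"
    define w where "w = vv (q - 1)"
    define a where "a = vv t"
    define b where "b = vv (Suc t)"
    have jab: "joins ends e0 a b" using jv[of t] e0_def a_def b_def by simp
    have uok: "u \<in> V - X" using vvok[of "Suc p"] pt q(1) by (simp add: u_def)
    have wok: "w \<in> V - X" using vvok[of "q - 1"] pt tq by (simp add: w_def)
    have s1: "F' - {e0} \<subseteq> HE - D" using F'D by blast
    have s2: "F' - {e0} \<subseteq> HE" using F'HE by blast
    have s3: "F' - {e0} \<subseteq> HE - {e0}" using F'HE by blast
    have x1: "reach ends (HE - D) u a" using reach_mono[OF r1 s1] unfolding u_def a_def .
    have "adjE ends (HE - D) a b" using jab e0F F'D unfolding adjE_def by blast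
    then have x2: "reach ends (HE - D) a b" by simp
    have x3: "reach ends (HE - D) b w" using reach_mono[OF r2 s1] unfolding b_def w_def .
    have ruw: "reach ends (HE - D) u w" using rtranclp_trans[OF x1 rtranclp_trans[OF x2 x3]] .
    have ua: "reach ends HE u a" using reach_mono[OF r1 s2] unfolding u_def a_def .
    have wb: "reach ends HE w b" using reach_mono[OF reach_sym[OF r2] s2] unfolding b_def w_def .
    have aT: "a \<in> VS ends S" "b \<in> VS ends S" using abT a_def b_def by auto
    have uin: "u \<in> cmp u" using uok by simp
    have win: "w \<in> cmp w" using wok by simp
    have Ku_int: "cmp u \<inter> VS ends S \<noteq> {}"
    proof
      assume h: "cmp u \<inter> VS ends S = {}"
      have "a \<in> cmp u" by (rule nonint[OF ua uok h])
      then show False using h aT by blast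
    qed
    have Kw_int: "cmp w \<inter> VS ends S \<noteq> {}"
    proof
      assume h: "cmp w \<inter> VS ends S = {}"
      have "b \<in> cmp w" by (rule nonint[OF wb wok h])
      then show False using h aT by blast
    qed
    have compu: "cmp u \<in> components_GXS V E ends S X" unfolding comps_eq mem_Collect_eq
      using uok by (intro exI[of _ u]) simp
    have compw: "cmp w \<in> components_GXS V E ends S X" unfolding comps_eq mem_Collect_eq
      using wok by (intro exI[of _ w]) simp
    have seeu: "sees E ends (vv p) (cmp u)"
      unfolding sees_def using ffE[of p] jv[of p] uin unfolding u_def by blast
    have "Suc (q - 1) = q" using tq by simp
    then have "joins ends (ff (q - 1)) (vv (q - 1)) (vv q)" using jv[of "q - 1"] by simp
    then have "joins ends (ff (q - 1)) (vv q) w" unfolding w_def by (rule joins_sym)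
    then have seew: "sees E ends (vv q) (cmp w)"
      unfolding sees_def using ffE[of "q - 1"] win by blast
    have CuC: "cmp u \<in> C" unfolding Cdef using compu Ku_int seeu p(2) by blast
    have CwC: "cmp w \<in> C" unfolding Cdef using compw Kw_int seew q(2) by blast
    have "Conn D (cmp u) (cmp w)" using ruw uin win by blast
    then have "cmp u = cmp w" using sep[rule_format, OF CuC CwC] by blast
    then have "w \<in> cmp u" using win by simp
    then have uwS: "reach ends (HE - S) u w" by simp
    have s4: "HE - S \<subseteq> HE - {e0}" using e0 by blast
    have y1: "reach ends (HE - {e0}) a u" using reach_mono[OF reach_sym[OF r1] s3] unfolding u_def a_def .
    have y2: "reach ends (HE - {e0}) u w" using reach_mono[OF uwS s4] .
    have y3: "reach ends (HE - {e0}) w b" using reach_mono[OF reach_sym[OF r2] s3] unfolding b_def w_def .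
    have rab: "reach ends (HE - {e0}) a b" using rtranclp_trans[OF y1 rtranclp_trans[OF y2 y3]] .
    have e0HE: "e0 \<in> HE" using e0F F'HE by blast
    have "has_S_cycle (V - X) HE ends S"
      apply (rule cycle_from_walk[of e0 HE S ends a b "V - X"])
      using e0HE e0 jab rab HE_ends by auto
    with noS show False by simp
  qed
qed

end


theorem lemma5:
  fixes V :: "'v set" and E :: "'e set" and ends :: "'e \<Rightarrow> 'v \<times> 'v"
    and S :: "'e set" and k :: nat and X Y :: "'v set"
  assumes "multigraph V E ends"
    and "S \<subseteq> E"
    and "dominant V E ends S k X"
    and "Y \<subseteq> X - VS ends S"
    and "Y \<noteq> {}"
  shows "card {K \<in> components_GXS V E ends S X.
                 K \<inter> VS ends S \<noteq> {} \<and> (\<exists>y\<in>Y. sees E ends y K)} \<ge> card Y + 2"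
proof (rule ccontr)
  define C where "C = {K \<in> components_GXS V E ends S X.
                 K \<inter> VS ends S \<noteq> {} \<and> (\<exists>y\<in>Y. sees E ends y K)}"
  assume "\<not> card {K \<in> components_GXS V E ends S X.
                 K \<inter> VS ends S \<noteq> {} \<and> (\<exists>y\<in>Y. sees E ends y K)} \<ge> card Y + 2"
  then have cC: "card C \<le> card Y + 1" unfolding C_def by simp
  note mg = assms(1)
  have sol: "is_solution V E ends S k X"
    and minX: "\<forall>X'. is_solution V E ends S k X' \<longrightarrow> card X \<le> card X'"
    and domX: "\<forall>X'. is_solution V E ends S k X' \<and> card X' = card X \<longrightarrow>
            card (X' \<inter> VS ends S) \<le> card (X \<inter> VS ends S)"
    using assms(3) unfolding dominant_def by auto
  have XV: "X \<subseteq> V" and cXk: "card X \<le> k"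
    and noS: "\<not> has_S_cycle (V - X) (edges_del E ends X) ends S"
    using sol unfolding is_solution_def by auto
  have finV: "finite V" using mg unfolding multigraph_def by simp
  have finX: "finite X" using finite_subset[OF XV finV] .
  have YX: "Y \<subseteq> X" using assms(4) by blast
  have finY: "finite Y" using finite_subset[OF YX finX] .
  have cY: "card Y \<ge> 1" using finY assms(5) by (simp add: Suc_le_eq card_gt_0_iff)
  define cm where "cm = (\<lambda>v. {w \<in> V - X. reach ends (edges_del E ends X - S) v w})"
  have comps: "components_GXS V E ends S X = cm ` (V - X)"
    unfolding comps_eq[OF mg noS] cm_def by (rule Setcompr_eq_image)
  have Csub: "C \<subseteq> cm ` (V - X)" unfolding C_def comps by (rule Collect_restrict)
  have "finite (cm ` (V - X))" using finV by simp
  then have finC: "finite C" using Csub finite_subset by blast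
  have compC: "\<forall>K\<in>C. \<exists>v\<in>V - X. K = {w \<in> V - X. reach ends (edges_del E ends X - S) v w}"
  proof
    fix K assume "K \<in> C"
    then have "K \<in> cm ` (V - X)" using Csub by blast
    then obtain v where v: "v \<in> V - X" "K = cm v" by (rule imageE) simp
    show "\<exists>v\<in>V - X. K = {w \<in> V - X. reach ends (edges_del E ends X - S) v w}"
      using v unfolding cm_def by (rule bexI[rotated]) 
  qed
  obtain D where D: "D \<subseteq> edges_del E ends X \<inter> S" "finite D" "card D \<le> card Y"
    "\<forall>K1\<in>C. \<forall>K2\<in>C. (\<exists>u\<in>K1. \<exists>w\<in>K2. reach ends (edges_del E ends X - D) u w) \<longrightarrow> K1 = K2"
  proof (cases "C = {}")
    case True then show ?thesis using that[of "{}"] by simp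
  next
    case False
    have "\<exists>D. {} \<subseteq> D \<and> D \<subseteq> edges_del E ends X \<inter> S \<and> finite D \<and> card D + 1 \<le> card ({}::'e set) + card C \<and>
      (\<forall>K1\<in>C. \<forall>K2\<in>C. (\<exists>u\<in>K1. \<exists>w\<in>K2. reach ends (edges_del E ends X - D) u w) \<longrightarrow> K1 = K2)"
      by (rule comb[OF mg noS finC False compC]) simp_all
    then obtain D where D: "{} \<subseteq> D" "D \<subseteq> edges_del E ends X \<inter> S" "finite D" "card D + 1 \<le> card ({}::'e set) + card C"
      "\<forall>K1\<in>C. \<forall>K2\<in>C. (\<exists>u\<in>K1. \<exists>w\<in>K2. reach ends (edges_del E ends X - D) u w) \<longrightarrow> K1 = K2"
      by (elim exE conjE)
    have "card D \<le> card Y" using D(4) cC by simp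
    then show ?thesis by (rule that[OF D(2) D(3) _ D(5)])
  qed
  define Z where "Z = (\<lambda>e. fst (ends e)) ` D"
  define X' where "X' = (X - Y) \<union> Z"
  have nocyc: "\<not> has_S_cycle (V - X') (edges_del E ends X') ends S"
    unfolding X'_def by (rule no_new_cycle[OF mg noS assms(4) D(1) D(4) C_def Z_def])
  have ZV: "Z \<subseteq> V - X" "Z \<subseteq> VS ends S"
  proof -
    show "Z \<subseteq> V - X"
    proof
      fix z assume "z \<in> Z"
      then obtain e where "e \<in> D" "z = fst (ends e)" unfolding Z_def by blast
      then show "z \<in> V - X" using HE_ends[OF mg noS, of e] D(1) by blast
    qed
    show "Z \<subseteq> VS ends S"
    proof
      fix z assume "z \<in> Z"
      then obtain e where "e \<in> D" "z = fst (ends e)" unfolding Z_def by blast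
      then show "z \<in> VS ends S" using D(1) unfolding VS_def by blast
    qed
  qed
  have finZ: "finite Z" using D(2) Z_def by simp
  have cZ: "card Z \<le> card Y" using card_image_le[OF D(2), of "\<lambda>e. fst (ends e)"] D(3) Z_def by simp
  have cYX: "card Y \<le> card X" using card_mono[OF finX YX] .
  have cardX': "card X' = card X - card Y + card Z"
  proof -
    have "card (X - Y) = card X - card Y" using card_Diff_subset[OF finY YX] .
    moreover have dj: "(X - Y) \<inter> Z = {}" using ZV by blast
    moreover have fXY: "finite (X - Y)" using finX by simp
    ultimately show ?thesis unfolding X'_def using card_Un_disjoint[OF fXY finZ dj] by simp
  qed
  have solX': "is_solution V E ends S k X'"
    unfolding is_solution_def
  proof (intro conjI)
    show "X' \<subseteq> V" unfolding X'_def using XV ZV by blast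
    show "card X' \<le> k" using cardX' cZ cYX cXk by linarith
    show "\<not> has_S_cycle (V - X') (edges_del E ends X') ends S" by (rule nocyc)
  qed
  then have "card X \<le> card X'" using minX by simp
  then have cZY: "card Z = card Y" using cardX' cZ cYX by linarith
  have eqc: "card X' = card X" using cardX' cZY cYX by linarith
  have le: "card (X' \<inter> VS ends S) \<le> card (X \<inter> VS ends S)" using domX[rule_format, OF conjI[OF solX' eqc]] .
  have eqs: "X' \<inter> VS ends S = (X \<inter> VS ends S) \<union> Z" using assms(4) ZV unfolding X'_def by blast
  have dj: "(X \<inter> VS ends S) \<inter> Z = {}" using ZV by blast
  have "finite (X \<inter> VS ends S)" using finX by simp
  then have "card ((X \<inter> VS ends S) \<union> Z) = card (X \<inter> VS ends S) + card Z"
    using card_Un_disjoint[OF _ finZ dj] by blast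
  then have "card (X' \<inter> VS ends S) = card (X \<inter> VS ends S) + card Z" using eqs by simp
  then show False using le cZY cY by linarith
qed

end
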